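(* Let $\mathcal{U}$ be a finite alphabet, $p_{UX}$ a distribution on $\mathcal{U}\times\mathcal{X}$, and consider the random code ensemble described in the context, where for each $n$ the randomization index $K$ has an arbitrary (possibly non-uniform) distribution $p_{K}^{(n)}$ on $\{1,\dots,2^{nR_r}\}$. If $$\liminf_{n\to\infty}\tfrac1n R_2(K)>I(X;Z|U),$$ then there exists $\beta>0$ such that for all sufficiently large $n$, $$\mathbb{E}_{\mathcal{C}_n}\Big[\mathbb{V}\big(p_{MZ^n},\,p_M\,p_{Z^n}\big)\Big]\le 2^{-\beta n},$$ where the expectation is over the random codebook $\mathcal{C}_n$ and $p_{MZ^n}$ is the joint distribution of $(M,Z^n)$ induced by a given codebook.
   Context: All logarithms are base 2. $W_{YZ|X}$ is a discrete memoryless wiretap channel with finite alphabets, used memorylessly; the joint distribution of $(U,X,Y,Z)$ is $p_{UX}(u,x)W_{YZ|X}(y,z|x)$. Random code ensemble: fix rates $R_0,R,R_r>0$ and $n$. Generate $U^n(i)$, $i\in\{1,\dots,2^{nR_0}\}$, independently, each i.i.d. with law $p_U$; for each $i$, generate $X^n(i,j,k)$, $j\in\{1,\dots,2^{nR}\}$, $k\in\{1,\dots,2^{nR_r}\}$, conditionally independently with law $\prod_{t=1}^n p_{X|U}(\cdot|U_t(i))$. The indices $M_0$ and $M$ are independent and uniform on $\{1,\dots,2^{nR_0}\}$ and $\{1,\dots,2^{nR}\}$, and independent of a randomization index $K\in\{1,\dots,2^{nR_r}\}$; the transmitted word is $X^n(M_0,M,K)$ and $Z^n$ is the eavesdropper's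 output of $W^n$. The variational distance is $\mathbb{V}(p,q)=\sum_a|p(a)-q(a)|$. The Rényi entropy of order two of $K$ is $R_2(K)=-\log\sum_k p_K(k)^2$. *)

theory Defs
  imports "HOL-Probability.Probability"
begin

definition idx_size :: "real \<Rightarrow> nat \<Rightarrow> nat" where
  "idx_size r n = nat \<lceil>2 powr (real n * r)\<rceil>"

definition marg_U :: "('u \<times> 'x) pmf \<Rightarrow> 'u pmf" where
  "marg_U pUX = map_pmf fst pUX"

definition cond_X_U :: "('u \<times> 'x) pmf \<Rightarrow> 'u \<Rightarrow> 'x pmf" where
  "cond_X_U pUX u = map_pmf snd (cond_pmf pUX {p. fst p = u})"

text \<open>Eavesdropper marginal W_{Z|X} of the wiretap channel W_{YZ|X}.\<close>
definition chanZ :: "('x \<Rightarrow> ('y \<times> 'z) pmf) \<Rightarrow> 'x \<Rightarrow> 'z pmf" where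
  "chanZ W x = map_pmf snd (W x)"

definition cond_mutual_info ::
  "('u::finite \<times> 'x::finite) pmf \<Rightarrow> ('x \<Rightarrow> ('y \<times> 'z::finite) pmf) \<Rightarrow> real" where
  "cond_mutual_info pUX W =
     (let pUXZ = (\<lambda>u x z. pmf pUX (u, x) * pmf (chanZ W x) z);
          pU = (\<lambda>u. \<Sum>x\<in>UNIV. pmf pUX (u, x));
          pUZ = (\<lambda>u z. \<Sum>x\<in>UNIV. pUXZ u x z)
      in \<Sum>u\<in>UNIV. \<Sum>x\<in>UNIV. \<Sum>z\<in>UNIV.
           (if pUXZ u x z = 0 then 0
            else pUXZ u x z * log 2 (pUXZ u x z * pU u / (pmf pUX (u, x) * pUZ u z))))"

definition renyi2 :: "'a pmf \<Rightarrow> real" where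
  "renyi2 p = - log 2 (\<Sum>k\<in>set_pmf p. (pmf p k)^2)"

definition var_dist :: "'a pmf \<Rightarrow> 'a pmf \<Rightarrow> real" where
  "var_dist p q = (\<Sum>\<^sub>\<infinity> a. \<bar>pmf p a - pmf q a\<bar>)"

text \<open>A codebook: U-codewords uc(i,t) and X-codewords xc(i,j,k,t)
  (indices from 0, time t < n).\<close>
type_synonym ('u, 'x) codebook = "(nat \<times> nat \<Rightarrow> 'u) \<times> (nat \<times> nat \<times> nat \<times> nat \<Rightarrow> 'x)"

definition codebook_pmf ::
  "('u \<times> 'x) pmf \<Rightarrow> real \<Rightarrow> real \<Rightarrow> real \<Rightarrow> nat \<Rightarrow> ('u, 'x) codebook pmf" where
  "codebook_pmf pUX R0 R Rr n =
     do { uc \<leftarrow> Pi_pmf ({..<idx_size R0 n} \<times> {..<n}) undefined (\<lambda>_. marg_U pUX);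
          xc \<leftarrow> Pi_pmf ({..<idx_size R0 n} \<times> {..<idx_size R n} \<times> {..<idx_size Rr n} \<times> {..<n})
                  undefined (\<lambda>(i, j, k, t). cond_X_U pUX (uc (i, t)));
          return_pmf (uc, xc) }"

definition joint_MZ ::
  "('x \<Rightarrow> ('y \<times> 'z) pmf) \<Rightarrow> real \<Rightarrow> real \<Rightarrow> nat \<Rightarrow> nat pmf \<Rightarrow> ('u, 'x) codebook
     \<Rightarrow> (nat \<times> (nat \<Rightarrow> 'z)) pmf" where
  "joint_MZ W R0 R n pK cb =
     do { m0 \<leftarrow> pmf_of_set {..<idx_size R0 n};
          m \<leftarrow> pmf_of_set {..<idx_size R n};
          k \<leftarrow> pK;
          z \<leftarrow> Pi_pmf {..<n} undefined (\<lambda>t. chanZ W (snd cb (m0, m, k, t)));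
          return_pmf (m, z) }"

definition product_of_marginals :: "('a \<times> 'b) pmf \<Rightarrow> ('a \<times> 'b) pmf" where
  "product_of_marginals p = pair_pmf (map_pmf fst p) (map_pmf snd p)"

end

theory Submission
  imports Defs
begin


lemma expectation_bind_finite:
  fixes h :: "'b \<Rightarrow> real"
  assumes "finite (set_pmf p)" "\<And>x. x \<in> set_pmf p \<Longrightarrow> finite (set_pmf (f x))"
  shows "measure_pmf.expectation (p \<bind> f) h = measure_pmf.expectation p (\<lambda>a. measure_pmf.expectation (f a) h)"
proof -
  have "measure_pmf.expectation (p \<bind> f) h = (\<Sum>a\<in>set_pmf p. pmf p a *\<^sub>R measure_pmf.expectation (f a) h)"
    using assms by (intro pmf_expectation_bind) auto
  also have "\<dots> = measure_pmf.expectation p (\<lambda>a. measure_pmf.expectation (f a) h)"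
    using assms by (subst integral_measure_pmf[of "set_pmf p"]) auto
  finally show ?thesis .
qed

lemma Pi_reindex1:
  assumes C: "finite C" and B: "finite B" and inj: "inj_on h B" and sub: "h ` B \<subseteq> C"
  shows "map_pmf (\<lambda>f b. if b \<in> B then f (h b) else d) (Pi_pmf C d p) = Pi_pmf B d (\<lambda>b. p (h b))"
proof -
  let ?g = "\<lambda>f b. if b \<in> B then f (h b) else d"
  let ?M = "Pi_pmf (h ` B) d p"
  have hB: "finite (h ` B)" using B by simp
  have "?M = map_pmf (\<lambda>f x. if x \<in> h ` B then f x else d) (Pi_pmf C d p)"
    using C sub by (rule Pi_pmf_subset)
  hence "map_pmf ?g ?M = map_pmf (?g \<circ> (\<lambda>f x. if x \<in> h ` B then f x else d)) (Pi_pmf C d p)"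
    by (simp add: pmf.map_comp)
  also have "?g \<circ> (\<lambda>f x. if x \<in> h ` B then f x else d) = ?g"
    by (auto simp: fun_eq_iff)
  finally have eq: "map_pmf ?g (Pi_pmf C d p) = map_pmf ?g ?M" by simp
  have setM: "set_pmf ?M \<subseteq> {f. \<forall>x. x \<notin> h ` B \<longrightarrow> f x = d}"
    using hB by (rule set_Pi_pmf_subset)
  have injg: "inj_on ?g (set_pmf ?M)"
  proof (rule inj_onI)
    fix f1 f2 assume f1: "f1 \<in> set_pmf ?M" and f2: "f2 \<in> set_pmf ?M" and e: "?g f1 = ?g f2"
    show "f1 = f2"
    proof
      fix x show "f1 x = f2 x"
      proof (cases "x \<in> h ` B")
        case True then obtain b where "b \<in> B" "x = h b" by auto
        with e show ?thesis by (metis (full_types))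
      next
        case False with f1 f2 setM show ?thesis by auto
      qed
    qed
  qed
  show ?thesis
  proof (rule pmf_eqI)
    fix y
    show "pmf (map_pmf ?g (Pi_pmf C d p)) y = pmf (Pi_pmf B d (\<lambda>b. p (h b))) y"
    proof (cases "\<forall>b. b \<notin> B \<longrightarrow> y b = d")
      case True
      define x where "x = (\<lambda>c. if c \<in> h ` B then y (inv_into B h c) else d)"
      have gx: "?g x = y" using True inj by (auto simp: x_def fun_eq_iff)
      have xM: "pmf ?M x = (\<Prod>c\<in>h ` B. pmf (p c) (x c))"
        using hB by (subst pmf_Pi) (auto simp: x_def)
      also have "\<dots> = (\<Prod>b\<in>B. pmf (p (h b)) (y b))"
        using inj by (subst prod.reindex) (auto simp: x_def)
      finally have xM: "pmf ?M x = (\<Prod>b\<in>B. pmf (p (h b)) (y b))" .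
      show ?thesis
      proof (cases "x \<in> set_pmf ?M")
        case True
        then show ?thesis unfolding eq
          using pmf_map_inj[OF injg True] gx xM B \<open>\<forall>b. b \<notin> B \<longrightarrow> y b = d\<close>
          by (simp add: pmf_Pi)
      next
        case False
        hence "pmf ?M x = 0" by (simp add: set_pmf_eq)
        moreover have "y \<notin> ?g ` set_pmf ?M"
        proof
          assume "y \<in> ?g ` set_pmf ?M"
          then obtain f where f: "f \<in> set_pmf ?M" "y = ?g f" by auto
          have "f c = x c" for c
          proof (cases "c \<in> h ` B")
            case True then obtain b where b: "b \<in> B" "c = h b" by auto
            then show ?thesis using f inj by (simp add: x_def)
          next
            case False then show ?thesis using f setM by (auto simp: x_def)
          qed
          hence "f = x" by auto
          with f False show False by simp
        qed
        ultimately show ?thesis unfolding eq using xM B True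
          by (simp add: pmf_map_outside pmf_Pi)
      qed
    next
      case False
      hence "y \<notin> ?g ` set_pmf ?M" by auto
      have "pmf (Pi_pmf B d (\<lambda>b. p (h b))) y = 0" using False B by (intro pmf_Pi_outside) auto
      with \<open>y \<notin> ?g ` set_pmf ?M\<close> show ?thesis unfolding eq by (simp add: pmf_map_outside)
    qed
  qed
qed

lemma pmf_map_inj_shape:
  assumes "inj_on g S" "set_pmf M \<subseteq> S" "x \<in> S"
  shows "pmf (map_pmf g M) (g x) = pmf M x"
proof (cases "x \<in> set_pmf M")
  case True
  then show ?thesis using assms by (intro pmf_map_inj) (auto intro: inj_on_subset)
next
  case False
  have "g x \<notin> g ` set_pmf M" using assms False by (auto dest: inj_onD)
  then show ?thesis using False by (simp add: pmf_map_outside set_pmf_eq)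
qed

lemma Pi_curry:
  assumes A: "finite A" and B: "finite B"
  shows "map_pmf (\<lambda>f a. if a \<in> A then (\<lambda>b. if b \<in> B then f (a, b) else d) else (\<lambda>_. d))
           (Pi_pmf (A \<times> B) d p) = Pi_pmf A (\<lambda>_. d) (\<lambda>a. Pi_pmf B d (\<lambda>b. p (a, b)))"
proof -
  let ?g = "\<lambda>f a. if a \<in> A then (\<lambda>b. if b \<in> B then f (a, b) else d) else (\<lambda>_. d)"
  let ?M = "Pi_pmf (A \<times> B) d p"
  let ?S = "{f. \<forall>x. x \<notin> A \<times> B \<longrightarrow> f x = d}"
  have AB: "finite (A \<times> B)" using A B by simp
  have setM: "set_pmf ?M \<subseteq> ?S" using AB by (rule set_Pi_pmf_subset)
  have injg: "inj_on ?g ?S"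
  proof (rule inj_onI)
    fix f1 f2 assume f1: "f1 \<in> ?S" and f2: "f2 \<in> ?S" and e: "?g f1 = ?g f2"
    show "f1 = f2"
    proof
      fix x show "f1 x = f2 x"
      proof (cases "x \<in> A \<times> B")
        case True then obtain a b where ab: "a \<in> A" "b \<in> B" "x = (a, b)" by auto
        from e have "?g f1 a b = ?g f2 a b" by (rule fun_cong[OF fun_cong])
        with ab show ?thesis by simp
      next
        case False
        hence "f1 x = d" "f2 x = d" using f1 f2 by blast+
        then show ?thesis by simp
      qed
    qed
  qed
  show ?thesis
  proof (rule pmf_eqI)
    fix y
    show "pmf (map_pmf ?g ?M) y = pmf (Pi_pmf A (\<lambda>_. d) (\<lambda>a. Pi_pmf B d (\<lambda>b. p (a, b)))) y"
    proof (cases "\<forall>a b. (a \<notin> A \<or> b \<notin> B) \<longrightarrow> y a b = d")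
      case True
      define x where "x = (\<lambda>(a, b). y a b)"
      have xS: "x \<in> ?S" using True by (auto simp: x_def)
      have gx: "?g x = y" using True by (auto simp: x_def fun_eq_iff)
      have "pmf (map_pmf ?g ?M) y = pmf ?M x"
        using pmf_map_inj_shape[OF injg setM xS] gx by simp
      also have "\<dots> = (\<Prod>ab\<in>A \<times> B. pmf (p ab) (x ab))"
        using AB xS by (subst pmf_Pi) auto
      also have "\<dots> = (\<Prod>a\<in>A. \<Prod>b\<in>B. pmf (p (a, b)) (y a b))"
        unfolding prod.cartesian_product by (simp add: x_def case_prod_beta)
      also have "\<dots> = (\<Prod>a\<in>A. pmf (Pi_pmf B d (\<lambda>b. p (a, b))) (y a))"
        using B True by (intro prod.cong refl, subst pmf_Pi') auto
      also have "\<dots> = pmf (Pi_pmf A (\<lambda>_. d) (\<lambda>a. Pi_pmf B d (\<lambda>b. p (a, b)))) y"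
        using A True by (subst pmf_Pi') (auto simp: fun_eq_iff)
      finally show ?thesis .
    next
      case False
      then obtain a b where ab: "a \<notin> A \<or> b \<notin> B" "y a b \<noteq> d" by auto
      have "y \<notin> ?g ` set_pmf ?M"
      proof
        assume "y \<in> ?g ` set_pmf ?M"
        then obtain f where "y = ?g f" by blast
        hence "y a b = ?g f a b" by simp
        with ab show False by (cases "a \<in> A") auto
      qed
      hence "pmf (map_pmf ?g ?M) y = 0" by (simp add: pmf_map_outside)
      moreover have "pmf (Pi_pmf A (\<lambda>_. d) (\<lambda>a. Pi_pmf B d (\<lambda>b. p (a, b)))) y = 0"
      proof (cases "a \<in> A")
        case False
        then show ?thesis using A ab by (intro pmf_Pi_outside) auto
      next
        case True
        hence "b \<notin> B" using ab by auto
        have "pmf (Pi_pmf B d (\<lambda>b. p (a, b))) (y a) = 0"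
          using B ab \<open>b \<notin> B\<close> by (intro pmf_Pi_outside) auto
        then show ?thesis using A True by (subst pmf_Pi) (auto intro: prod_zero)
      qed
      ultimately show ?thesis by simp
    qed
  qed
qed

lemma vd_mixture:
  fixes q :: "nat \<Rightarrow> 'b pmf" and Q :: "'b \<Rightarrow> real"
  assumes N: "N > 0" and B: "finite B" and supp: "\<And>m. m < N \<Longrightarrow> set_pmf (q m) \<subseteq> B"
  defines "P \<equiv> pmf_of_set {..<N} \<bind> (\<lambda>m. map_pmf (Pair m) (q m))"
  shows "var_dist P (product_of_marginals P) \<le> (2 / N) * (\<Sum>m<N. \<Sum>z\<in>B. \<bar>pmf (q m) z - Q z\<bar>)"
proof -
  have ne: "{..<N} \<noteq> {}" using N by auto
  define A where "A m z = pmf (q m) z" for m z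
  have pmfP: "pmf P (m, z) = (if m < N then A m z / N else 0)" for m z
  proof -
    have inner: "pmf (map_pmf (Pair m') (q m')) (m, z) = (if m' = m then A m z else 0)" for m'
    proof (cases "m' = m")
      case True then show ?thesis by (simp add: A_def pmf_map_inj' inj_on_def)
    next
      case False then show ?thesis by (subst pmf_map_outside) auto
    qed
    have "pmf P (m, z) = (\<Sum>m'<N. pmf (map_pmf (Pair m') (q m')) (m, z)) / N"
      unfolding P_def pmf_bind using ne by (simp add: integral_pmf_of_set)
    also have "\<dots> = (\<Sum>m'<N. (if m' = m then A m z else 0)) / N"
      by (simp only: inner)
    finally show ?thesis by (simp add: sum.delta')
  qed
  have fstP: "map_pmf fst P = pmf_of_set {..<N}"
    unfolding P_def map_bind_pmf by (simp add: pmf.map_comp o_def bind_return_pmf')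
  have sndP: "map_pmf snd P = pmf_of_set {..<N} \<bind> q"
    unfolding P_def map_bind_pmf by (simp add: pmf.map_comp o_def)
  define Pz where "Pz z = (\<Sum>m<N. A m z) / N" for z
  have pmf_sndP: "pmf (map_pmf snd P) z = Pz z" for z
    unfolding sndP pmf_bind using ne by (simp add: integral_pmf_of_set Pz_def A_def)
  have pmfPM: "pmf (product_of_marginals P) (m, z) = (if m < N then Pz z / N else 0)" for m z
    unfolding product_of_marginals_def pmf_pair fstP pmf_sndP using ne by (simp add: pmf_of_set)
  have A0: "A m z = 0" if "m < N" "z \<notin> B" for m z
    using supp[OF that(1)] that(2) by (auto simp: A_def set_pmf_eq)
  have Pz0: "Pz z = 0" if "z \<notin> B" for z
    using A0 that by (simp add: Pz_def)
  have "var_dist P (product_of_marginals P) =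
        (\<Sum>\<^sub>\<infinity>x\<in>{..<N} \<times> B. \<bar>pmf P x - pmf (product_of_marginals P) x\<bar>)"
    unfolding var_dist_def
  proof (rule infsum_cong_neutral)
    fix x assume x: "x \<in> UNIV - {..<N} \<times> B"
    obtain m z where mz: "x = (m, z)" by fastforce
    show "\<bar>pmf P x - pmf (product_of_marginals P) x\<bar> = 0"
    proof (cases "m < N")
      case True
      hence "z \<notin> B" using x mz by auto
      then show ?thesis using True A0 Pz0 by (simp add: mz pmfP pmfPM)
    qed (simp add: mz pmfP pmfPM)
  qed auto
  also have "\<dots> = (\<Sum>x\<in>{..<N} \<times> B. \<bar>pmf P x - pmf (product_of_marginals P) x\<bar>)"
    using B by simp
  also have "\<dots> = (\<Sum>m<N. \<Sum>z\<in>B. \<bar>A m z - Pz z\<bar> / N)"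
    unfolding sum.cartesian_product
    by (intro sum.cong refl) (auto simp: pmfP pmfPM diff_divide_distrib[symmetric])
  also have "\<dots> \<le> (\<Sum>m<N. \<Sum>z\<in>B. (\<bar>A m z - Q z\<bar> + (\<Sum>m'<N. \<bar>A m' z - Q z\<bar>) / N) / N)"
  proof (intro sum_mono divide_right_mono)
    fix m z
    have "\<bar>Q z - Pz z\<bar> = \<bar>(\<Sum>m'<N. Q z - A m' z)\<bar> / N"
      using N by (simp add: Pz_def sum_subtractf field_simps)
    also have "\<dots> \<le> (\<Sum>m'<N. \<bar>A m' z - Q z\<bar>) / N"
      by (intro divide_right_mono order.trans[OF sum_abs]) (auto simp: abs_minus_commute)
    finally show "\<bar>A m z - Pz z\<bar> \<le> \<bar>A m z - Q z\<bar> + (\<Sum>m'<N. \<bar>A m' z - Q z\<bar>) / N"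
      by linarith
  qed auto
  also have "\<dots> = (\<Sum>m<N. \<Sum>z\<in>B. \<bar>A m z - Q z\<bar> / N) + (\<Sum>m<N. \<Sum>z\<in>B. (\<Sum>m'<N. \<bar>A m' z - Q z\<bar>) / N / N)"
    by (simp add: sum.distrib add_divide_distrib)
  also have "(\<Sum>m<N. \<Sum>z\<in>B. (\<Sum>m'<N. \<bar>A m' z - Q z\<bar>) / N / N) = (\<Sum>z\<in>B. (\<Sum>m'<N. \<bar>A m' z - Q z\<bar>) / N)"
  proof -
    have "(\<Sum>m<N. \<Sum>z\<in>B. (\<Sum>m'<N. \<bar>A m' z - Q z\<bar>) / N / N) = N * (\<Sum>z\<in>B. (\<Sum>m'<N. \<bar>A m' z - Q z\<bar>) / N / N)"
      by simp
    also have "\<dots> = (\<Sum>z\<in>B. N * ((\<Sum>m'<N. \<bar>A m' z - Q z\<bar>) / N / N))"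
      by (simp add: sum_distrib_left)
    also have "\<dots> = (\<Sum>z\<in>B. (\<Sum>m'<N. \<bar>A m' z - Q z\<bar>) / N)"
      using N by (intro sum.cong) auto
    finally show ?thesis .
  qed
  also have "\<dots> = (\<Sum>m'<N. \<Sum>z\<in>B. \<bar>A m' z - Q z\<bar>) / N"
    by (simp add: sum_divide_distrib[symmetric] sum.swap[of _ B])
  also have "(\<Sum>m<N. \<Sum>z\<in>B. \<bar>A m z - Q z\<bar> / N) = (\<Sum>m<N. \<Sum>z\<in>B. \<bar>A m z - Q z\<bar>) / N"
    by (simp add: sum_divide_distrib)
  finally show ?thesis using N by (simp add: A_def field_simps)
qed



definition Zs :: "nat \<Rightarrow> (nat \<Rightarrow> 'z) set" where "Zs n = PiE {..<n} (\<lambda>_. UNIV)"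

definition Wn :: "('x \<Rightarrow> ('y \<times> 'z) pmf) \<Rightarrow> nat \<Rightarrow> (nat \<Rightarrow> 'x) \<Rightarrow> (nat \<Rightarrow> 'z) \<Rightarrow> real" where
  "Wn W n x z = (\<Prod>t<n. pmf (chanZ W (x t)) (z t))"

definition chanZU :: "('u \<times> 'x) pmf \<Rightarrow> ('x \<Rightarrow> ('y \<times> 'z) pmf) \<Rightarrow> 'u \<Rightarrow> 'z pmf" where
  "chanZU pUX W u = cond_X_U pUX u \<bind> chanZ W"

definition Vn :: "('u \<times> 'x) pmf \<Rightarrow> ('x \<Rightarrow> ('y \<times> 'z) pmf) \<Rightarrow> nat \<Rightarrow> (nat \<Rightarrow> 'u) \<Rightarrow> (nat \<Rightarrow> 'z) \<Rightarrow> real" where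
  "Vn pUX W n u z = (\<Prod>t<n. pmf (chanZU pUX W (u t)) (z t))"

definition Dfun :: "('u \<times> 'x) pmf \<Rightarrow> ('x \<Rightarrow> ('y \<times> 'z) pmf) \<Rightarrow> nat \<Rightarrow> nat \<Rightarrow> nat pmf \<Rightarrow> (nat \<Rightarrow> 'u) \<Rightarrow> (nat \<Rightarrow> nat \<Rightarrow> 'x) \<Rightarrow> real" where
  "Dfun pUX W n Nr pK u xs = (\<Sum>z\<in>Zs n. \<bar>(\<Sum>k<Nr. pmf pK k * Wn W n (xs k) z) - Vn pUX W n u z\<bar>)"

lemma finite_Zs [simp]: "finite (Zs n :: (nat \<Rightarrow> 'z::finite) set)"
  unfolding Zs_def by (rule finite_PiE) auto

lemma set_PiZ: "set_pmf (Pi_pmf {..<n} undefined p) \<subseteq> Zs n"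
  using set_Pi_pmf_subset[of "{..<n}" undefined p] by (auto simp: Zs_def PiE_def extensional_def)

lemma pmf_PiZ: "z \<in> Zs n \<Longrightarrow> pmf (Pi_pmf {..<n} undefined (\<lambda>t. chanZ W (x t))) z = Wn W n x z"
  unfolding Wn_def by (subst pmf_Pi') (auto simp: Zs_def PiE_def extensional_def)

lemma idx_size_pos: "idx_size r n > 0"
  unfolding idx_size_def by auto

lemma joint_bound:
  fixes W :: "'x \<Rightarrow> ('y \<times> 'z::finite) pmf"
  assumes pK: "set_pmf pK \<subseteq> {..<idx_size Rr n}"
  shows "var_dist (joint_MZ W R0 R n pK cb) (product_of_marginals (joint_MZ W R0 R n pK cb)) \<le>
    (2 / idx_size R n) * (\<Sum>m<idx_size R n. (\<Sum>m0<idx_size R0 n.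
        Dfun pUX W n (idx_size Rr n) pK (\<lambda>t. fst cb (m0, t)) (\<lambda>k t. snd cb (m0, m, k, t))) / idx_size R0 n)"
proof -
  define N0 where "N0 = idx_size R0 n"
  define N where "N = idx_size R n"
  define Nr where "Nr = idx_size Rr n"
  have N0: "N0 > 0" and N: "N > 0" and Nr: "Nr > 0" unfolding N0_def N_def Nr_def by (auto intro: idx_size_pos)
  define PZ where "PZ m0 m k = Pi_pmf {..<n} undefined (\<lambda>t. chanZ W (snd cb (m0, m, k, t)))" for m0 m k
  define q where "q m = pmf_of_set {..<N0} \<bind> (\<lambda>m0. pK \<bind> (\<lambda>k. PZ m0 m k))" for m
  define Q where "Q z = (\<Sum>m0<N0. Vn pUX W n (\<lambda>t. fst cb (m0, t)) z) / N0" for z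
  have jeq: "joint_MZ W R0 R n pK cb = pmf_of_set {..<N} \<bind> (\<lambda>m. map_pmf (Pair m) (q m))"
    unfolding joint_MZ_def q_def PZ_def N_def N0_def
    by (subst bind_commute_pmf) (simp add: map_bind_pmf map_pmf_def bind_assoc_pmf)
  have supp: "set_pmf (q m) \<subseteq> Zs n" for m
    unfolding q_def PZ_def using set_PiZ by fastforce
  have pmfq: "pmf (q m) z = (\<Sum>m0<N0. \<Sum>k<Nr. pmf pK k * Wn W n (\<lambda>t. snd cb (m0, m, k, t)) z) / N0"
    if z: "z \<in> Zs n" for m z
  proof -
    have "pmf (q m) z = (\<Sum>m0<N0. measure_pmf.expectation pK (\<lambda>k. pmf (PZ m0 m k) z)) / N0"
      unfolding q_def pmf_bind using N0 by (subst integral_pmf_of_set) auto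
    also have "\<dots> = (\<Sum>m0<N0. \<Sum>k<Nr. pmf pK k * Wn W n (\<lambda>t. snd cb (m0, m, k, t)) z) / N0"
    proof (intro arg_cong[where f="\<lambda>x. x / _"] sum.cong refl)
      fix m0
      have "measure_pmf.expectation pK (\<lambda>k. pmf (PZ m0 m k) z) = (\<Sum>k<Nr. pmf (PZ m0 m k) z * pmf pK k)"
        using pK by (intro integral_measure_pmf_real) (auto simp: Nr_def)
      then show "measure_pmf.expectation pK (\<lambda>k. pmf (PZ m0 m k) z) = (\<Sum>k<Nr. pmf pK k * Wn W n (\<lambda>t. snd cb (m0, m, k, t)) z)"
        using z by (simp add: PZ_def pmf_PiZ mult.commute)
    qed
    finally show ?thesis .
  qed
  have h1: "var_dist (joint_MZ W R0 R n pK cb) (product_of_marginals (joint_MZ W R0 R n pK cb))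
      \<le> (2 / N) * (\<Sum>m<N. \<Sum>z\<in>Zs n. \<bar>pmf (q m) z - Q z\<bar>)"
    unfolding jeq using N supp by (intro vd_mixture) auto
  have h2: "(\<Sum>m<N. \<Sum>z\<in>Zs n. \<bar>pmf (q m) z - Q z\<bar>) \<le>
     (\<Sum>m<N. (\<Sum>m0<N0. Dfun pUX W n Nr pK (\<lambda>t. fst cb (m0, t)) (\<lambda>k t. snd cb (m0, m, k, t))) / N0)"
  proof (intro sum_mono)
    fix m
    have "(\<Sum>z\<in>Zs n. \<bar>pmf (q m) z - Q z\<bar>) = (\<Sum>z\<in>Zs n. \<bar>\<Sum>m0<N0. ((\<Sum>k<Nr. pmf pK k * Wn W n (\<lambda>t. snd cb (m0, m, k, t)) z) - Vn pUX W n (\<lambda>t. fst cb (m0, t)) z)\<bar> / N0)"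
      using N0 by (intro sum.cong refl) (simp add: pmfq Q_def sum_subtractf diff_divide_distrib[symmetric])
    also have "\<dots> \<le> (\<Sum>z\<in>Zs n. (\<Sum>m0<N0. \<bar>(\<Sum>k<Nr. pmf pK k * Wn W n (\<lambda>t. snd cb (m0, m, k, t)) z) - Vn pUX W n (\<lambda>t. fst cb (m0, t)) z\<bar>) / N0)"
      by (intro sum_mono divide_right_mono sum_abs) auto
    also have "\<dots> = (\<Sum>m0<N0. Dfun pUX W n Nr pK (\<lambda>t. fst cb (m0, t)) (\<lambda>k t. snd cb (m0, m, k, t))) / N0"
      unfolding Dfun_def by (simp add: sum_divide_distrib[symmetric] sum.swap[of _ "Zs n"])
    finally show "(\<Sum>z\<in>Zs n. \<bar>pmf (q m) z - Q z\<bar>) \<le> (\<Sum>m0<N0. Dfun pUX W n Nr pK (\<lambda>t. fst cb (m0, t)) (\<lambda>k t. snd cb (m0, m, k, t))) / N0" .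
  qed
  from order.trans[OF h1 mult_left_mono[OF h2]] show ?thesis by (simp add: N_def N0_def Nr_def)
qed



lemma finite_set_Pi_pmf:
  assumes "finite A" "\<And>x. x \<in> A \<Longrightarrow> finite (set_pmf (p x))"
  shows "finite (set_pmf (Pi_pmf A d p))"
  using assms by (intro finite_subset[OF set_Pi_pmf_subset'[OF assms(1)]] finite_PiE_dflt) auto

lemma finite_set_pmf_finite_type: "finite (set_pmf (p :: 'a::finite pmf))"
  by simp

lemma Dfun_cong:
  assumes "\<And>t. t < n \<Longrightarrow> u t = u' t" "\<And>k t. k < Nr \<Longrightarrow> t < n \<Longrightarrow> xs k t = xs' k t"
  shows "Dfun pUX W n Nr pK u xs = Dfun pUX W n Nr pK u' xs'"
  unfolding Dfun_def Wn_def Vn_def using assms by (intro sum.cong refl arg_cong[where f=abs] arg_cong2[where f="(-)"] prod.cong) auto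

definition XS :: "('u \<times> 'x) pmf \<Rightarrow> nat \<Rightarrow> nat \<Rightarrow> (nat \<Rightarrow> 'u) \<Rightarrow> (nat \<Rightarrow> nat \<Rightarrow> 'x) pmf" where
  "XS pUX n Nr u = Pi_pmf {..<Nr} (\<lambda>_. undefined) (\<lambda>k. Pi_pmf {..<n} undefined (\<lambda>t. cond_X_U pUX (u t)))"

definition PU :: "('u \<times> 'x) pmf \<Rightarrow> nat \<Rightarrow> (nat \<Rightarrow> 'u) pmf" where
  "PU pUX n = Pi_pmf {..<n} undefined (\<lambda>_. marg_U pUX)"

definition Gfun where
  "Gfun pUX W n Nr pK u = measure_pmf.expectation (XS pUX n Nr u) (\<lambda>xs. Dfun pUX W n Nr pK u xs)"

lemma codebook_exp:
  fixes pUX :: "('u::finite \<times> 'x::finite) pmf" and W :: "'x \<Rightarrow> ('y \<times> 'z::finite) pmf"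
  assumes m0: "m0 < idx_size R0 n" and m: "m < idx_size R n"
  shows "measure_pmf.expectation (codebook_pmf pUX R0 R Rr n)
     (\<lambda>cb. Dfun pUX W n (idx_size Rr n) pK (\<lambda>t. fst cb (m0, t)) (\<lambda>k t. snd cb (m0, m, k, t)))
   = measure_pmf.expectation (PU pUX n) (Gfun pUX W n (idx_size Rr n) pK)"
proof -
  define N0 where "N0 = idx_size R0 n"
  define N where "N = idx_size R n"
  define Nr where "Nr = idx_size Rr n"
  define I2 where "I2 = {..<N0} \<times> {..<n}"
  define I4 where "I4 = {..<N0} \<times> {..<N} \<times> {..<Nr} \<times> {..<n}"
  define UC where "UC = Pi_pmf I2 undefined (\<lambda>_. marg_U pUX)"
  define XC where "XC uc = Pi_pmf I4 undefined (\<lambda>(i, j, k, t). cond_X_U pUX (uc (i, t)))" for uc :: "nat \<times> nat \<Rightarrow> 'u"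
  define F where "F u xs = Dfun pUX W n Nr pK u xs" for u xs
  have fin2: "finite I2" and fin4: "finite I4" unfolding I2_def I4_def by auto
  have cbeq: "codebook_pmf pUX R0 R Rr n = UC \<bind> (\<lambda>uc. XC uc \<bind> (\<lambda>xc. return_pmf (uc, xc)))"
    unfolding codebook_pmf_def UC_def XC_def I2_def I4_def N0_def N_def Nr_def by simp
  have finUC: "finite (set_pmf UC)" unfolding UC_def using fin2 by (intro finite_set_Pi_pmf) auto
  have finXC: "finite (set_pmf (XC uc))" for uc unfolding XC_def using fin4 by (intro finite_set_Pi_pmf) auto
  have step1: "measure_pmf.expectation (codebook_pmf pUX R0 R Rr n)
     (\<lambda>cb. F (\<lambda>t. fst cb (m0, t)) (\<lambda>k t. snd cb (m0, m, k, t))) =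
     measure_pmf.expectation UC (\<lambda>uc. measure_pmf.expectation (XC uc) (\<lambda>xc. F (\<lambda>t. uc (m0, t)) (\<lambda>k t. xc (m0, m, k, t))))"
    unfolding cbeq using finUC finXC
    by (subst expectation_bind_finite) (auto intro!: Bochner_Integration.integral_cong expectation_bind_finite simp: expectation_bind_finite)
  define hk where "hk = (\<lambda>(k::nat, t::nat). (m0, m, k, t))"
  define blk where "blk xc = (\<lambda>k. if k \<in> {..<Nr} then (\<lambda>t. if t \<in> {..<n} then xc (hk (k, t)) else undefined) else (\<lambda>_. undefined))" for xc :: "nat \<times> nat \<times> nat \<times> nat \<Rightarrow> 'x"
  have blk_map: "map_pmf blk (XC uc) = XS pUX n Nr (\<lambda>t. uc (m0, t))" for uc
  proof -
    have inj: "inj_on hk ({..<Nr} \<times> {..<n})" by (auto simp: hk_def inj_on_def)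
    have sub: "hk ` ({..<Nr} \<times> {..<n}) \<subseteq> I4" using m0 m by (auto simp: hk_def I4_def N0_def N_def)
    have r1: "map_pmf (\<lambda>f b. if b \<in> {..<Nr} \<times> {..<n} then f (hk b) else undefined) (XC uc) =
      Pi_pmf ({..<Nr} \<times> {..<n}) undefined (\<lambda>b. cond_X_U pUX (uc (m0, snd b)))"
      unfolding XC_def using fin4 inj sub by (subst Pi_reindex1) (auto simp: hk_def case_prod_beta)
    have r2: "map_pmf (\<lambda>f a. if a \<in> {..<Nr} then (\<lambda>b. if b \<in> {..<n} then f (a, b) else undefined) else (\<lambda>_. undefined))
       (Pi_pmf ({..<Nr} \<times> {..<n}) undefined (\<lambda>b. cond_X_U pUX (uc (m0, snd b)))) = XS pUX n Nr (\<lambda>t. uc (m0, t))"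
      unfolding XS_def by (subst Pi_curry) auto
    have "blk = (\<lambda>f a. if a \<in> {..<Nr} then (\<lambda>b. if b \<in> {..<n} then f (a, b) else undefined) else (\<lambda>_. undefined)) \<circ>
       (\<lambda>f b. if b \<in> {..<Nr} \<times> {..<n} then f (hk b) else undefined)"
      by (auto simp: blk_def fun_eq_iff)
    then show ?thesis using r1 r2 by (simp flip: pmf.map_comp)
  qed
  have step2: "measure_pmf.expectation (XC uc) (\<lambda>xc. F (\<lambda>t. uc (m0, t)) (\<lambda>k t. xc (m0, m, k, t))) =
      Gfun pUX W n Nr pK (\<lambda>t. uc (m0, t))" for uc
  proof -
    have "measure_pmf.expectation (XC uc) (\<lambda>xc. F (\<lambda>t. uc (m0, t)) (\<lambda>k t. xc (m0, m, k, t))) =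
        measure_pmf.expectation (XC uc) (\<lambda>xc. F (\<lambda>t. uc (m0, t)) (blk xc))"
      unfolding F_def by (intro Bochner_Integration.integral_cong refl Dfun_cong) (auto simp: blk_def hk_def)
    also have "\<dots> = measure_pmf.expectation (map_pmf blk (XC uc)) (\<lambda>xs. F (\<lambda>t. uc (m0, t)) xs)"
      by simp
    finally show ?thesis by (simp add: blk_map Gfun_def F_def)
  qed
  have Gcong: "Gfun pUX W n Nr pK u = Gfun pUX W n Nr pK u'" if "\<And>t. t < n \<Longrightarrow> u t = u' t" for u u'
  proof -
    have "XS pUX n Nr u = XS pUX n Nr u'" unfolding XS_def using that
      by (intro Pi_pmf_cong refl) auto
    then show ?thesis unfolding Gfun_def using that
      by (intro Bochner_Integration.integral_cong refl Dfun_cong) auto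
  qed
  define ut where "ut uc = (\<lambda>t. if t \<in> {..<n} then uc (m0, t) else undefined)" for uc :: "nat \<times> nat \<Rightarrow> 'u"
  have ut_map: "map_pmf ut UC = PU pUX n"
    unfolding ut_def UC_def PU_def using fin2 m0
    by (subst Pi_reindex1[where h="\<lambda>t. (m0, t)"]) (auto simp: inj_on_def I2_def N0_def)
  have "measure_pmf.expectation UC (\<lambda>uc. Gfun pUX W n Nr pK (\<lambda>t. uc (m0, t))) =
        measure_pmf.expectation UC (\<lambda>uc. Gfun pUX W n Nr pK (ut uc))"
    by (intro Bochner_Integration.integral_cong refl Gcong) (auto simp: ut_def)
  also have "\<dots> = measure_pmf.expectation (PU pUX n) (Gfun pUX W n Nr pK)"
    by (simp flip: ut_map)
  finally show ?thesis using step1 step2 by (simp add: F_def Nr_def)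
qed



lemma finite_codebook: "finite (set_pmf (codebook_pmf (pUX :: ('u::finite \<times> 'x::finite) pmf) R0 R Rr n))"
  unfolding codebook_pmf_def
  by (simp, intro finite_UN_I finite_set_Pi_pmf) auto

lemma exp_V_bound:
  fixes pUX :: "('u::finite \<times> 'x::finite) pmf" and W :: "'x \<Rightarrow> ('y \<times> 'z::finite) pmf"
  assumes pK: "set_pmf pK \<subseteq> {..<idx_size Rr n}"
  shows "measure_pmf.expectation (codebook_pmf pUX R0 R Rr n)
             (\<lambda>cb. var_dist (joint_MZ W R0 R n pK cb) (product_of_marginals (joint_MZ W R0 R n pK cb)))
     \<le> 2 * measure_pmf.expectation (PU pUX n) (Gfun pUX W n (idx_size Rr n) pK)"
proof -
  define N0 where "N0 = idx_size R0 n"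
  define N where "N = idx_size R n"
  define Nr where "Nr = idx_size Rr n"
  define E where "E = measure_pmf.expectation (PU pUX n) (Gfun pUX W n Nr pK)"
  let ?M = "codebook_pmf pUX R0 R Rr n"
  have N0: "N0 > 0" and N: "N > 0" unfolding N0_def N_def by (auto intro: idx_size_pos)
  have int: "integrable (measure_pmf ?M) f" for f :: "_ \<Rightarrow> real"
    by (intro integrable_measure_pmf_finite finite_codebook)
  have "measure_pmf.expectation ?M
             (\<lambda>cb. var_dist (joint_MZ W R0 R n pK cb) (product_of_marginals (joint_MZ W R0 R n pK cb)))
     \<le> measure_pmf.expectation ?M (\<lambda>cb. (2 / N) * (\<Sum>m<N. (\<Sum>m0<N0.
        Dfun pUX W n Nr pK (\<lambda>t. fst cb (m0, t)) (\<lambda>k t. snd cb (m0, m, k, t))) / N0))"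
    by (intro integral_mono int) (use joint_bound[OF pK] in \<open>simp add: N_def N0_def Nr_def\<close>)
  also have "\<dots> = (2 / N) * (\<Sum>m<N. (\<Sum>m0<N0. measure_pmf.expectation ?M (\<lambda>cb.
        Dfun pUX W n Nr pK (\<lambda>t. fst cb (m0, t)) (\<lambda>k t. snd cb (m0, m, k, t)))) / N0)"
    by (simp add: int integral_sum)
  also have "\<dots> = (2 / N) * (\<Sum>m<N. (\<Sum>m0<N0. E) / N0)"
    by (intro arg_cong[where f="\<lambda>x. _ * x"] sum.cong refl arg_cong[where f="\<lambda>x. x / _"])
       (simp add: E_def codebook_exp N_def N0_def Nr_def)
  also have "\<dots> = 2 * E" using N N0 by simp
  finally show ?thesis by (simp add: E_def Nr_def)
qed



lemma exp_abs_le_sqrt: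
  fixes X :: "'a \<Rightarrow> real"
  assumes fin: "finite (set_pmf M)"
  shows "measure_pmf.expectation M (\<lambda>x. \<bar>X x\<bar>) \<le> sqrt (measure_pmf.expectation M (\<lambda>x. (X x)\<^sup>2))"
proof -
  have int: "integrable (measure_pmf M) f" for f :: "'a \<Rightarrow> real"
    using fin by (rule integrable_measure_pmf_finite)
  define a where "a = measure_pmf.expectation M (\<lambda>x. \<bar>X x\<bar>)"
  have a0: "a \<ge> 0" unfolding a_def by simp
  have "0 \<le> measure_pmf.expectation M (\<lambda>x. (\<bar>X x\<bar> - a)\<^sup>2)" by simp
  also have "\<dots> = measure_pmf.expectation M (\<lambda>x. (X x)\<^sup>2 - 2 * a * \<bar>X x\<bar> + a\<^sup>2)"
    by (intro Bochner_Integration.integral_cong refl) (simp add: power2_eq_square algebra_simps)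
  also have "\<dots> = measure_pmf.expectation M (\<lambda>x. (X x)\<^sup>2) - 2 * a * a + a\<^sup>2"
    by (simp add: int a_def)
  finally have "a\<^sup>2 \<le> measure_pmf.expectation M (\<lambda>x. (X x)\<^sup>2)" by (simp add: power2_eq_square)
  then show ?thesis using a0 unfolding a_def by (simp add: real_le_rsqrt)
qed

lemma exp_component:
  fixes g :: "'b \<Rightarrow> real"
  assumes "finite K" "k \<in> K"
  shows "measure_pmf.expectation (Pi_pmf K d (\<lambda>_. P)) (\<lambda>xs. g (xs k)) = measure_pmf.expectation P g"
proof -
  have "measure_pmf.expectation (Pi_pmf K d (\<lambda>_. P)) (\<lambda>xs. g (xs k)) =
        measure_pmf.expectation (map_pmf (\<lambda>xs. xs k) (Pi_pmf K d (\<lambda>_. P))) g" by simp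
  also have "map_pmf (\<lambda>xs. xs k) (Pi_pmf K d (\<lambda>_. P)) = P"
    using assms by (simp add: Pi_pmf_component)
  finally show ?thesis .
qed

lemma exp_pair_indep:
  fixes g :: "'b \<Rightarrow> real"
  assumes K: "finite K" and k: "k \<in> K" and l: "l \<in> K" "l \<noteq> k" and fin: "finite (set_pmf P)"
     and g0: "\<And>x. g x \<ge> 0"
  shows "measure_pmf.expectation (Pi_pmf K d (\<lambda>_. P)) (\<lambda>xs. g (xs k) * g (xs l)) =
         measure_pmf.expectation P g * measure_pmf.expectation P g"
proof -
  define f where "f j = (if j = k \<or> j = l then g else (\<lambda>_. 1))" for j
  have "(\<lambda>xs. g (xs k) * g (xs l)) = (\<lambda>xs. \<Prod>j\<in>K. f j (xs j))"
  proof
    fix xs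
    have "(\<Prod>j\<in>K. f j (xs j)) = (\<Prod>j\<in>{k, l}. f j (xs j))"
      using K k l by (intro prod.mono_neutral_right) (auto simp: f_def)
    then show "g (xs k) * g (xs l) = (\<Prod>j\<in>K. f j (xs j))" using l by (simp add: f_def)
  qed
  moreover have "measure_pmf.expectation (Pi_pmf K d (\<lambda>_. P)) (\<lambda>xs. \<Prod>j\<in>K. f j (xs j)) =
     (\<Prod>j\<in>K. measure_pmf.expectation P (f j))"
    using K fin g0 by (intro expectation_prod_Pi_pmf integrable_measure_pmf_finite) (auto simp: f_def)
  moreover have "(\<Prod>j\<in>K. measure_pmf.expectation P (f j)) = (\<Prod>j\<in>{k, l}. measure_pmf.expectation P (f j))"
    using K k l by (intro prod.mono_neutral_right) (auto simp: f_def)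
  ultimately show ?thesis using l by (simp add: f_def)
qed

lemma second_moment:
  fixes g :: "'b \<Rightarrow> real" and a :: "'k \<Rightarrow> real"
  assumes K: "finite K" and fin: "finite (set_pmf P)" and g0: "\<And>x. g x \<ge> 0"
  defines "\<mu> \<equiv> measure_pmf.expectation P g"
  shows "measure_pmf.expectation (Pi_pmf K d (\<lambda>_. P)) (\<lambda>xs. (\<Sum>k\<in>K. a k * (g (xs k) - \<mu>))\<^sup>2)
     \<le> (\<Sum>k\<in>K. (a k)\<^sup>2 * measure_pmf.expectation P (\<lambda>x. (g x)\<^sup>2))"
proof -
  let ?M = "Pi_pmf K d (\<lambda>_. P)"
  have finM: "finite (set_pmf ?M)" using K fin by (intro finite_set_Pi_pmf) auto
  have int: "integrable (measure_pmf ?M) f" for f :: "_ \<Rightarrow> real"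
    using finM by (rule integrable_measure_pmf_finite)
  have intP: "integrable (measure_pmf P) f" for f :: "_ \<Rightarrow> real"
    using fin by (rule integrable_measure_pmf_finite)
  have cross: "measure_pmf.expectation ?M (\<lambda>xs. (g (xs k) - \<mu>) * (g (xs l) - \<mu>)) =
      (if k = l then measure_pmf.expectation P (\<lambda>x. (g x)\<^sup>2) - \<mu>\<^sup>2 else 0)" if "k \<in> K" "l \<in> K" for k l
  proof -
    have e1: "measure_pmf.expectation ?M (\<lambda>xs. g (xs j)) = \<mu>" if "j \<in> K" for j
      using exp_component[OF K that] by (simp add: \<mu>_def)
    have "measure_pmf.expectation ?M (\<lambda>xs. (g (xs k) - \<mu>) * (g (xs l) - \<mu>)) =
          measure_pmf.expectation ?M (\<lambda>xs. g (xs k) * g (xs l) - \<mu> * g (xs l) - \<mu> * g (xs k) + \<mu> * \<mu>)"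
      by (intro Bochner_Integration.integral_cong refl) (simp add: algebra_simps)
    also have "\<dots> = measure_pmf.expectation ?M (\<lambda>xs. g (xs k) * g (xs l)) - \<mu> * \<mu> - \<mu> * \<mu> + \<mu> * \<mu>"
      using that by (simp add: int e1)
    also have "measure_pmf.expectation ?M (\<lambda>xs. g (xs k) * g (xs l)) =
       (if k = l then measure_pmf.expectation P (\<lambda>x. (g x)\<^sup>2) else \<mu> * \<mu>)"
    proof (cases "k = l")
      case True
      then show ?thesis using exp_component[OF K that(1), of d P "\<lambda>x. (g x)\<^sup>2"]
        by (simp add: power2_eq_square)
    next
      case False
      then show ?thesis using exp_pair_indep[OF K that(1) that(2) _ fin g0] by (simp add: \<mu>_def)
    qed
    finally show ?thesis by (simp add: power2_eq_square)
  qed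
  have "measure_pmf.expectation ?M (\<lambda>xs. (\<Sum>k\<in>K. a k * (g (xs k) - \<mu>))\<^sup>2) =
     measure_pmf.expectation ?M (\<lambda>xs. \<Sum>k\<in>K. \<Sum>l\<in>K. a k * a l * ((g (xs k) - \<mu>) * (g (xs l) - \<mu>)))"
    by (intro Bochner_Integration.integral_cong refl)
       (simp add: power2_eq_square sum_product algebra_simps)
  also have "\<dots> = (\<Sum>k\<in>K. \<Sum>l\<in>K. a k * a l * measure_pmf.expectation ?M (\<lambda>xs. (g (xs k) - \<mu>) * (g (xs l) - \<mu>)))"
    by (simp add: int integral_sum)
  also have "\<dots> = (\<Sum>k\<in>K. \<Sum>l\<in>K. a k * a l * (if k = l then measure_pmf.expectation P (\<lambda>x. (g x)\<^sup>2) - \<mu>\<^sup>2 else 0))"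
    by (intro sum.cong refl) (simp add: cross)
  also have "\<dots> = (\<Sum>k\<in>K. (a k)\<^sup>2 * (measure_pmf.expectation P (\<lambda>x. (g x)\<^sup>2) - \<mu>\<^sup>2))"
    using K by (simp add: power2_eq_square if_distrib sum.delta cong: if_cong)
  also have "\<dots> \<le> (\<Sum>k\<in>K. (a k)\<^sup>2 * measure_pmf.expectation P (\<lambda>x. (g x)\<^sup>2))"
    by (intro sum_mono mult_left_mono) auto
  finally show ?thesis .
qed



definition PX :: "('u \<times> 'x) pmf \<Rightarrow> nat \<Rightarrow> (nat \<Rightarrow> 'u) \<Rightarrow> (nat \<Rightarrow> 'x) pmf" where
  "PX pUX n u = Pi_pmf {..<n} undefined (\<lambda>t. cond_X_U pUX (u t))"

definition eps where
  "eps pUX W n T u = measure_pmf.expectation (PX pUX n u)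
     (\<lambda>x. \<Sum>z\<in>Zs n. (if Wn W n x z > 2 powr T * Vn pUX W n u z then Wn W n x z else 0))"

lemma Wn_nonneg: "Wn W n x z \<ge> 0" unfolding Wn_def by (simp add: prod_nonneg)
lemma Vn_nonneg: "Vn pUX W n u z \<ge> 0" unfolding Vn_def by (simp add: prod_nonneg)

lemma finite_PX: "finite (set_pmf (PX (pUX :: ('u \<times> 'x::finite) pmf) n u))"
  unfolding PX_def by (intro finite_set_Pi_pmf) auto

lemma Vn_exp:
  fixes pUX :: "('u \<times> 'x::finite) pmf"
  shows "Vn pUX W n u z = measure_pmf.expectation (PX pUX n u) (\<lambda>x. Wn W n x z)"
proof -
  have "measure_pmf.expectation (PX pUX n u) (\<lambda>x. Wn W n x z) =
     (\<Prod>t<n. measure_pmf.expectation (cond_X_U pUX (u t)) (\<lambda>x'. pmf (chanZ W x') (z t)))"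
    unfolding PX_def Wn_def
    by (rule expectation_prod_Pi_pmf) (auto intro: integrable_measure_pmf_finite)
  also have "\<dots> = Vn pUX W n u z"
    unfolding Vn_def chanZU_def by (simp add: pmf_bind)
  finally show ?thesis by simp
qed

lemma sum_Vn:
  fixes W :: "'x \<Rightarrow> ('y \<times> 'z::finite) pmf"
  shows "(\<Sum>z\<in>Zs n. Vn pUX W n u z) = 1"
proof -
  have "(\<Sum>z\<in>Zs n. Vn pUX W n u z) = (\<Prod>t<n. \<Sum>y\<in>UNIV. pmf (chanZU pUX W (u t)) y)"
    unfolding Zs_def Vn_def by (subst prod_sum_PiE) auto
  also have "\<dots> = 1" by (simp add: sum_pmf_eq_1)
  finally show ?thesis .
qed

lemma Gfun_bound:
  fixes pUX :: "('u \<times> 'x::finite) pmf" and W :: "'x \<Rightarrow> ('y \<times> 'z::finite) pmf"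
  assumes pK: "set_pmf pK \<subseteq> {..<Nr}"
  shows "Gfun pUX W n Nr pK u \<le> sqrt ((\<Sum>k<Nr. (pmf pK k)\<^sup>2) * 2 powr T) + 2 * eps pUX W n T u"
proof -
  define P where "P = PX pUX n u"
  define M where "M = XS pUX n Nr u"
  have M: "M = Pi_pmf {..<Nr} (\<lambda>_. undefined) (\<lambda>_. P)" unfolding M_def XS_def P_def PX_def ..
  define a where "a k = pmf pK k" for k
  define c where "c = (\<Sum>k<Nr. (a k)\<^sup>2)"
  define V where "V z = Vn pUX W n u z" for z
  define W1 where "W1 z x = (if Wn W n x z \<le> 2 powr T * V z then Wn W n x z else 0)" for z x
  define W2 where "W2 z x = (if Wn W n x z > 2 powr T * V z then Wn W n x z else 0)" for z x
  define \<mu>1 where "\<mu>1 z = measure_pmf.expectation P (W1 z)" for z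
  define \<mu>2 where "\<mu>2 z = measure_pmf.expectation P (W2 z)" for z
  have finP: "finite (set_pmf P)" unfolding P_def by (rule finite_PX)
  have finM: "finite (set_pmf M)" unfolding M using finP by (intro finite_set_Pi_pmf) auto
  have intP: "integrable (measure_pmf P) f" for f :: "_ \<Rightarrow> real" using finP by (rule integrable_measure_pmf_finite)
  have intM: "integrable (measure_pmf M) f" for f :: "_ \<Rightarrow> real" using finM by (rule integrable_measure_pmf_finite)
  have suma: "(\<Sum>k<Nr. a k) = 1" unfolding a_def using pK by (intro sum_pmf_eq_1) auto
  have a0: "a k \<ge> 0" for k by (simp add: a_def)
  have W1_0: "W1 z x \<ge> 0" and W2_0: "W2 z x \<ge> 0" for z x by (auto simp: W1_def W2_def Wn_nonneg)
  have Wsplit: "Wn W n x z = W1 z x + W2 z x" for z x by (auto simp: W1_def W2_def)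
  have Vsplit: "V z = \<mu>1 z + \<mu>2 z" for z
    unfolding V_def Vn_exp \<mu>1_def \<mu>2_def P_def[symmetric] Wsplit by (simp add: intP)
  have \<mu>2_0: "\<mu>2 z \<ge> 0" for z unfolding \<mu>2_def using W2_0 by simp
  have pw: "\<bar>(\<Sum>k<Nr. a k * Wn W n (xs k) z) - V z\<bar> \<le>
     \<bar>\<Sum>k<Nr. a k * (W1 z (xs k) - \<mu>1 z)\<bar> + (\<Sum>k<Nr. a k * W2 z (xs k)) + \<mu>2 z" for xs z
  proof -
    have "(\<Sum>k<Nr. a k * Wn W n (xs k) z) - V z =
       (\<Sum>k<Nr. a k * (W1 z (xs k) - \<mu>1 z)) + (\<Sum>k<Nr. a k * W2 z (xs k)) - \<mu>2 z"
    proof -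
      have "(\<Sum>k<Nr. \<mu>1 z * a k) = \<mu>1 z" using suma by (simp flip: sum_distrib_left)
      then show ?thesis using suma by (simp add: Wsplit Vsplit algebra_simps sum.distrib sum_subtractf flip: sum_distrib_right)
    qed
    moreover have "(\<Sum>k<Nr. a k * W2 z (xs k)) \<ge> 0" using a0 W2_0 by (intro sum_nonneg) auto
    ultimately show ?thesis using \<mu>2_0[of z] by (smt (verit))
  qed
  have sq: "measure_pmf.expectation M (\<lambda>xs. \<bar>\<Sum>k<Nr. a k * (W1 z (xs k) - \<mu>1 z)\<bar>) \<le> sqrt (c * 2 powr T) * V z" for z
  proof -
    have e1: "measure_pmf.expectation M (\<lambda>xs. \<bar>\<Sum>k<Nr. a k * (W1 z (xs k) - \<mu>1 z)\<bar>) \<le>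
       sqrt (measure_pmf.expectation M (\<lambda>xs. (\<Sum>k<Nr. a k * (W1 z (xs k) - \<mu>1 z))\<^sup>2))"
      using finM by (rule exp_abs_le_sqrt)
    have "measure_pmf.expectation M (\<lambda>xs. (\<Sum>k<Nr. a k * (W1 z (xs k) - \<mu>1 z))\<^sup>2) \<le>
       (\<Sum>k<Nr. (a k)\<^sup>2 * measure_pmf.expectation P (\<lambda>x. (W1 z x)\<^sup>2))"
      unfolding M \<mu>1_def using finP W1_0 by (intro second_moment) auto
    also have "\<dots> = c * measure_pmf.expectation P (\<lambda>x. (W1 z x)\<^sup>2)"
      by (simp add: c_def sum_distrib_right)
    also have "\<dots> \<le> c * measure_pmf.expectation P (\<lambda>x. 2 powr T * V z * Wn W n x z)"
    proof (intro mult_left_mono integral_mono intP)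
      fix x
      show "(W1 z x)\<^sup>2 \<le> 2 powr T * V z * Wn W n x z"
        using Wn_nonneg[of W n x z] Vn_nonneg[of pUX W n u z]
        by (auto simp: W1_def power2_eq_square V_def intro: mult_right_mono)
    qed (auto simp: c_def intro: sum_nonneg)
    also have "measure_pmf.expectation P (\<lambda>x. 2 powr T * V z * Wn W n x z) = 2 powr T * V z * V z"
      by (simp add: V_def Vn_exp P_def)
    finally have e2: "measure_pmf.expectation M (\<lambda>xs. (\<Sum>k<Nr. a k * (W1 z (xs k) - \<mu>1 z))\<^sup>2)
        \<le> c * (2 powr T * V z * V z)" .
    have "measure_pmf.expectation M (\<lambda>xs. \<bar>\<Sum>k<Nr. a k * (W1 z (xs k) - \<mu>1 z)\<bar>) \<le>
         sqrt (c * (2 powr T * V z * V z))"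
      using e1 real_sqrt_le_mono[OF e2] by linarith
    also have "\<dots> = sqrt (c * 2 powr T) * V z"
      by (simp add: real_sqrt_mult V_def Vn_nonneg mult.assoc flip: power2_eq_square)
    finally show ?thesis .
  qed
  have ew2: "measure_pmf.expectation M (\<lambda>xs. \<Sum>k<Nr. a k * W2 z (xs k)) = \<mu>2 z" for z
  proof -
    have "measure_pmf.expectation M (\<lambda>xs. \<Sum>k<Nr. a k * W2 z (xs k)) = (\<Sum>k<Nr. a k * \<mu>2 z)"
      unfolding \<mu>2_def
    proof -
      have "measure_pmf.expectation M (\<lambda>xs. \<Sum>k<Nr. a k * W2 z (xs k)) = (\<Sum>k<Nr. a k * measure_pmf.expectation M (\<lambda>xs. W2 z (xs k)))"
        by (simp add: intM)
      also have "\<dots> = (\<Sum>k<Nr. a k * measure_pmf.expectation P (W2 z))"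
        unfolding M by (intro sum.cong refl) (simp add: exp_component)
      finally show "measure_pmf.expectation M (\<lambda>xs. \<Sum>k<Nr. a k * W2 z (xs k)) = (\<Sum>k<Nr. a k * measure_pmf.expectation P (W2 z))" .
    qed
    also have "\<dots> = \<mu>2 z" using suma by (simp flip: sum_distrib_right)
    finally show ?thesis .
  qed
  have "Gfun pUX W n Nr pK u = measure_pmf.expectation M (\<lambda>xs. \<Sum>z\<in>Zs n. \<bar>(\<Sum>k<Nr. a k * Wn W n (xs k) z) - V z\<bar>)"
    unfolding Gfun_def Dfun_def M_def a_def V_def ..
  also have "\<dots> \<le> measure_pmf.expectation M (\<lambda>xs. \<Sum>z\<in>Zs n.
      \<bar>\<Sum>k<Nr. a k * (W1 z (xs k) - \<mu>1 z)\<bar> + (\<Sum>k<Nr. a k * W2 z (xs k)) + \<mu>2 z)"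
    by (intro integral_mono intM sum_mono pw)
  also have "\<dots> = (\<Sum>z\<in>Zs n. measure_pmf.expectation M (\<lambda>xs. \<bar>\<Sum>k<Nr. a k * (W1 z (xs k) - \<mu>1 z)\<bar>)
       + measure_pmf.expectation M (\<lambda>xs. \<Sum>k<Nr. a k * W2 z (xs k)) + \<mu>2 z)"
    by (simp add: intM integral_sum)
  also have "\<dots> \<le> (\<Sum>z\<in>Zs n. sqrt (c * 2 powr T) * V z + 2 * \<mu>2 z)"
    by (intro sum_mono) (use sq ew2 in fastforce)
  also have "\<dots> = sqrt (c * 2 powr T) + 2 * (\<Sum>z\<in>Zs n. \<mu>2 z)"
    by (simp add: sum.distrib V_def sum_Vn flip: sum_distrib_left)
  also have "(\<Sum>z\<in>Zs n. \<mu>2 z) = eps pUX W n T u"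
    unfolding eps_def \<mu>2_def P_def[symmetric] W2_def V_def by (simp add: intP integral_sum)
  finally show ?thesis by (simp add: c_def a_def)
qed



definition rr where
  "rr pUX W s u' x' y = pmf (chanZ W x') y * (pmf (chanZ W x') y / pmf (chanZU pUX W u') y) powr s"

definition g1 where
  "g1 pUX W s u' = measure_pmf.expectation (cond_X_U pUX u') (\<lambda>x'. \<Sum>y\<in>UNIV. rr pUX W s u' x' y)"

definition Phi where
  "Phi pUX W s = measure_pmf.expectation (marg_U pUX) (g1 pUX W s)"

lemma rr_nonneg: "rr pUX W s u' x' y \<ge> 0" unfolding rr_def by simp

lemma g1_nonneg: "g1 pUX W s u' \<ge> 0" unfolding g1_def using rr_nonneg
  by (intro Bochner_Integration.integral_nonneg sum_nonneg) auto

lemma Vn_pos: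
  fixes pUX :: "('u \<times> 'x::finite) pmf"
  assumes "x \<in> set_pmf (PX pUX n u)" "Wn W n x z > 0"
  shows "Vn pUX W n u z > 0"
proof -
  have fin: "finite (set_pmf (PX pUX n u))" by (rule finite_PX)
  have "Vn pUX W n u z = (\<Sum>x'\<in>set_pmf (PX pUX n u). Wn W n x' z * pmf (PX pUX n u) x')"
    unfolding Vn_exp using fin by (intro integral_measure_pmf_real) auto
  also have "\<dots> \<ge> Wn W n x z * pmf (PX pUX n u) x"
    using fin assms(1) by (intro member_le_sum) (auto simp: Wn_nonneg)
  finally show ?thesis using assms by (smt (verit) mult_pos_pos pmf_positive)
qed

lemma eps_bound:
  fixes pUX :: "('u \<times> 'x::finite) pmf" and W :: "'x \<Rightarrow> ('y \<times> 'z::finite) pmf"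
  assumes s: "s > 0"
  shows "eps pUX W n T u \<le> 2 powr (- s * T) * (\<Prod>t<n. g1 pUX W s (u t))"
proof -
  let ?P = "PX pUX n u"
  have fin: "finite (set_pmf ?P)" by (rule finite_PX)
  have intP: "integrable (measure_pmf ?P) f" for f :: "_ \<Rightarrow> real" using fin by (rule integrable_measure_pmf_finite)
  have "eps pUX W n T u \<le> measure_pmf.expectation ?P
      (\<lambda>x. \<Sum>z\<in>Zs n. 2 powr (- s * T) * (Wn W n x z * (Wn W n x z / Vn pUX W n u z) powr s))"
    unfolding eps_def
  proof (intro integral_mono_AE intP AE_pmfI sum_mono)
    fix x z assume x: "x \<in> set_pmf ?P"
    show "(if Wn W n x z > 2 powr T * Vn pUX W n u z then Wn W n x z else 0) \<le>
       2 powr (- s * T) * (Wn W n x z * (Wn W n x z / Vn pUX W n u z) powr s)"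
    proof (cases "Wn W n x z > 2 powr T * Vn pUX W n u z")
      case True
      have Wp: "Wn W n x z > 0" using True Vn_nonneg[of pUX W n u z]
        by (smt (verit) mult_nonneg_nonneg powr_ge_zero)
      have Vp: "Vn pUX W n u z > 0" by (rule Vn_pos[OF x Wp])
      have "1 \<le> (Wn W n x z / Vn pUX W n u z) / 2 powr T"
        using True Vp by (simp add: field_simps)
      hence "1 \<le> ((Wn W n x z / Vn pUX W n u z) / 2 powr T) powr s"
        using s by (intro ge_one_powr_ge_zero) auto
      also have "((Wn W n x z / Vn pUX W n u z) / 2 powr T) powr s = 2 powr (- s * T) * (Wn W n x z / Vn pUX W n u z) powr s"
        by (simp add: powr_divide powr_powr powr_minus powr_mult field_simps mult.commute)
      finally have "Wn W n x z * 1 \<le> Wn W n x z * (2 powr (- s * T) * (Wn W n x z / Vn pUX W n u z) powr s)"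
        using Wp by (intro mult_left_mono) auto
      then show ?thesis using True by (simp add: algebra_simps)
    next
      case False
      then show ?thesis by (simp add: Wn_nonneg)
    qed
  qed
  also have "\<dots> = 2 powr (- s * T) * measure_pmf.expectation ?P (\<lambda>x. \<Prod>t<n. \<Sum>y\<in>UNIV. rr pUX W s (u t) (x t) y)"
  proof -
    have eq: "(\<Sum>z\<in>Zs n. Wn W n x z * (Wn W n x z / Vn pUX W n u z) powr s) = (\<Prod>t<n. \<Sum>y\<in>UNIV. rr pUX W s (u t) (x t) y)" for x
    proof -
      have "(\<Sum>z\<in>Zs n. Wn W n x z * (Wn W n x z / Vn pUX W n u z) powr s) = (\<Sum>z\<in>Zs n. \<Prod>t<n. rr pUX W s (u t) (x t) (z t))"
        unfolding Wn_def Vn_def rr_def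
        by (intro sum.cong refl) (simp add: prod_dividef[symmetric] prod_powr_distrib prod.distrib)
      also have "\<dots> = (\<Prod>t<n. \<Sum>y\<in>UNIV. rr pUX W s (u t) (x t) y)"
        unfolding Zs_def by (subst prod_sum_PiE) auto
      finally show ?thesis .
    qed
    show ?thesis by (simp add: eq flip: sum_distrib_left)
  qed
  also have "measure_pmf.expectation ?P (\<lambda>x. \<Prod>t<n. \<Sum>y\<in>UNIV. rr pUX W s (u t) (x t) y) = (\<Prod>t<n. g1 pUX W s (u t))"
    unfolding PX_def g1_def
    by (subst expectation_prod_Pi_pmf) (auto intro: integrable_measure_pmf_finite sum_nonneg rr_nonneg)
  finally show ?thesis .
qed

lemma PU_prod:
  fixes pUX :: "('u::finite \<times> 'x) pmf"
  shows "measure_pmf.expectation (PU pUX n) (\<lambda>u. \<Prod>t<n. g1 pUX W s (u t)) = Phi pUX W s ^ n"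
  unfolding PU_def Phi_def
  by (subst expectation_prod_Pi_pmf) (auto intro: integrable_measure_pmf_finite g1_nonneg)



lemma exp_quad:
  fixes y :: real
  assumes "\<bar>y\<bar> \<le> 1"
  shows "exp y \<le> 1 + y + y\<^sup>2"
proof (cases "y \<ge> 0")
  case True then show ?thesis using assms exp_bound[of y] by auto
next
  case False
  define z where "z = - y"
  have z: "z > 0" "z \<le> 1" using False assms by (auto simp: z_def)
  have e: "1 + z + z\<^sup>2 / 2 \<le> exp z" using z by (intro exp_lower_Taylor_quadratic) auto
  have pos: "1 - z + z\<^sup>2 > 0" using z by (smt (verit) power2_eq_square mult_pos_pos)
  have id: "(1 + z + z\<^sup>2 / 2) * (1 - z + z\<^sup>2) = 1 + z\<^sup>2 / 2 + z ^ 3 / 2 + z ^ 4 / 2"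
    by (simp add: field_simps power2_eq_square power3_eq_cube power4_eq_xxxx)
  have "1 \<le> (1 + z + z\<^sup>2 / 2) * (1 - z + z\<^sup>2)"
    unfolding id using z by (simp add: add_nonneg_nonneg)
  also have "\<dots> \<le> exp z * (1 - z + z\<^sup>2)" using e pos by (intro mult_right_mono) auto
  finally have "1 / exp z \<le> 1 - z + z\<^sup>2" by (simp add: field_simps)
  then show ?thesis by (simp add: z_def exp_minus field_simps)
qed

lemma mgf_bound:
  fixes a l :: "'i \<Rightarrow> real"
  assumes S: "finite S" and a0: "\<And>i. i \<in> S \<Longrightarrow> a i \<ge> 0" and a1: "(\<Sum>i\<in>S. a i) = 1" and d: "\<delta> > 0"
  shows "\<exists>s>0. s \<le> 1 \<and> (\<Sum>i\<in>S. a i * 2 powr (s * l i)) \<le> 2 powr (s * ((\<Sum>i\<in>S. a i * l i) + \<delta>))"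
proof -
  define L where "L = (\<Sum>i\<in>S. \<bar>l i\<bar>) + 1"
  have L1: "L \<ge> 1" unfolding L_def by (simp add: sum_nonneg)
  have lL: "\<bar>l i\<bar> \<le> L" if "i \<in> S" for i
    unfolding L_def using member_le_sum[of i S "\<lambda>i. \<bar>l i\<bar>"] S that by auto
  define s where "s = min (1 / (2 * L)) (\<delta> / L\<^sup>2)"
  have s0: "s > 0" using L1 d by (simp add: s_def)
  have s1: "s \<le> 1 / (2 * L)" and s2: "s \<le> \<delta> / L\<^sup>2" by (auto simp: s_def)
  have sL: "s * L \<le> 1 / 2" using s1 L1 by (simp add: field_simps)
  have sL2: "s * L\<^sup>2 \<le> \<delta>" using s2 L1 by (simp add: field_simps)
  have ln2: "0 < ln (2::real)" "ln (2::real) \<le> 1" using ln_2_less_1 by auto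
  define m where "m = (\<Sum>i\<in>S. a i * l i)"
  have tm: "2 powr (s * l i) \<le> 1 + s * ln 2 * l i + s * ln 2 * \<delta>" if i: "i \<in> S" for i
  proof -
    define y where "y = s * l i * ln 2"
    have "\<bar>y\<bar> \<le> s * L * ln 2" unfolding y_def using lL[OF i] s0 ln2
      by (simp add: abs_mult mult_left_mono mult_right_mono)
    also have "\<dots> \<le> (1/2) * 1" using sL ln2 s0 L1 by (intro mult_mono) auto
    also have "\<dots> \<le> 1" by simp
    finally have y1: "\<bar>y\<bar> \<le> 1" .
    have "y\<^sup>2 = s\<^sup>2 * (l i)\<^sup>2 * (ln 2)\<^sup>2" by (simp add: y_def power_mult_distrib)
    also have "\<dots> \<le> s\<^sup>2 * L\<^sup>2 * ln 2"
    proof -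
      have "(l i)\<^sup>2 \<le> L\<^sup>2" using lL[OF i] by (metis abs_ge_zero power2_abs power_mono)
      moreover have "(ln 2)\<^sup>2 \<le> ln (2::real)" using ln2 by (simp add: power2_eq_square mult_left_le)
      ultimately show ?thesis using ln2 by (intro mult_mono mult_left_mono) auto
    qed
    also have "\<dots> = s * ln 2 * (s * L\<^sup>2)" by (simp add: power2_eq_square)
    also have "\<dots> \<le> s * ln 2 * \<delta>" using sL2 s0 ln2 by (intro mult_left_mono) auto
    finally have y2: "y\<^sup>2 \<le> s * ln 2 * \<delta>" .
    have "2 powr (s * l i) = exp y" by (simp add: powr_def y_def mult.commute)
    also have "\<dots> \<le> 1 + y + y\<^sup>2" by (rule exp_quad[OF y1])
    finally show ?thesis using y2 by (simp add: y_def mult.commute mult.left_commute)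
  qed
  have "(\<Sum>i\<in>S. a i * 2 powr (s * l i)) \<le> (\<Sum>i\<in>S. a i * (1 + s * ln 2 * l i + s * ln 2 * \<delta>))"
    by (intro sum_mono mult_left_mono tm a0)
  also have "\<dots> = 1 + s * ln 2 * (m + \<delta>)"
  proof -
    have "(\<Sum>i\<in>S. a i * (1 + s * ln 2 * l i + s * ln 2 * \<delta>)) =
       (\<Sum>i\<in>S. a i) + (s * ln 2) * (\<Sum>i\<in>S. a i * l i) + (s * ln 2 * \<delta>) * (\<Sum>i\<in>S. a i)"
      by (simp add: distrib_left sum.distrib sum_distrib_left sum_distrib_right mult_ac)
    then show ?thesis using a1 by (simp add: m_def algebra_simps)
  qed
  also have "\<dots> \<le> exp (s * ln 2 * (m + \<delta>))" by (rule exp_ge_add_one_self)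
  also have "\<dots> = 2 powr (s * (m + \<delta>))" by (simp add: powr_def mult_ac)
  finally have fin: "(\<Sum>i\<in>S. a i * 2 powr (s * l i)) \<le> 2 powr (s * (m + \<delta>))" .
  have "1 / (2 * L) \<le> 1" using L1 by (simp add: divide_le_eq)
  hence "s \<le> 1" using s1 by linarith
  then show ?thesis using s0 fin unfolding m_def by blast
qed



definition pUm :: "('u \<times> 'x::finite) pmf \<Rightarrow> 'u \<Rightarrow> real" where
  "pUm pUX u = (\<Sum>x\<in>UNIV. pmf pUX (u, x))"

lemma measure_fst_slice:
  fixes p :: "('u \<times> 'x::finite) pmf"
  shows "measure_pmf.prob p {q. fst q = u} = pUm p u"
proof -
  have "{q. fst q = u} = Pair u ` UNIV" by auto
  hence "measure_pmf.prob p {q. fst q = u} = measure_pmf.prob p (Pair u ` UNIV)" by (rule arg_cong)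
  also have "\<dots> = sum (pmf p) (Pair u ` UNIV)"
    by (intro measure_measure_pmf_finite) simp
  also have "\<dots> = pUm p u" unfolding pUm_def by (subst sum.reindex) (auto simp: inj_on_def)
  finally show ?thesis .
qed

lemma pmf_margU:
  fixes pUX :: "('u \<times> 'x::finite) pmf"
  shows "pmf (marg_U pUX) u = pUm pUX u"
  unfolding marg_U_def pmf_map
  by (subst measure_fst_slice[symmetric]) (simp add: vimage_def)

lemma pmf_condXU:
  fixes pUX :: "('u \<times> 'x::finite) pmf"
  assumes pos: "pUm pUX u > 0"
  shows "pmf (cond_X_U pUX u) x = pmf pUX (u, x) / pUm pUX u"
proof -
  define S where "S = {q :: 'u \<times> 'x. fst q = u}"
  have ne: "set_pmf pUX \<inter> S \<noteq> {}"
  proof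
    assume e: "set_pmf pUX \<inter> S = {}"
    have "pmf pUX (u, x') = 0" for x' using e by (auto simp: S_def set_pmf_eq)
    hence "pUm pUX u = 0" by (simp add: pUm_def)
    with pos show False by simp
  qed
  have inj: "inj_on snd S" by (auto simp: S_def inj_on_def)
  have sub: "set_pmf (cond_pmf pUX S) \<subseteq> S" using ne by (simp add: set_cond_pmf)
  have "pmf (cond_X_U pUX u) x = pmf (map_pmf snd (cond_pmf pUX S)) (snd (u, x))"
    by (simp add: cond_X_U_def S_def)
  also have "\<dots> = pmf (cond_pmf pUX S) (u, x)"
    using inj sub by (rule pmf_map_inj_shape) (simp add: S_def)
  also have "\<dots> = pmf pUX (u, x) / measure_pmf.prob pUX S"
    using ne by (simp add: pmf_cond S_def)
  also have "measure_pmf.prob pUX S = pUm pUX u" unfolding S_def by (rule measure_fst_slice)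
  finally show ?thesis .
qed

lemma pmf_chanZU:
  fixes pUX :: "('u \<times> 'x::finite) pmf"
  assumes pos: "pUm pUX u > 0"
  shows "pmf (chanZU pUX W u) y = (\<Sum>x\<in>UNIV. pmf pUX (u, x) * pmf (chanZ W x) y) / pUm pUX u"
proof -
  have "pmf (chanZU pUX W u) y = (\<Sum>x\<in>UNIV. pmf (chanZ W x) y * pmf (cond_X_U pUX u) x)"
    unfolding chanZU_def pmf_bind by (intro integral_measure_pmf_real) auto
  also have "\<dots> = (\<Sum>x\<in>UNIV. pmf pUX (u, x) * pmf (chanZ W x) y) / pUm pUX u"
    using pos by (simp add: pmf_condXU sum_divide_distrib mult.commute)
  finally show ?thesis .
qed

definition aa where "aa pUX W i = (case i of (u, x, y) \<Rightarrow> pmf pUX (u, x) * pmf (chanZ W x) y)"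
definition ll where "ll pUX W i = (case i of (u, x, y) \<Rightarrow> log 2 (pmf (chanZ W x) y / pmf (chanZU pUX W u) y))"

lemma sum_triple:
  "(\<Sum>i\<in>UNIV. f i) = (\<Sum>u\<in>UNIV. \<Sum>x\<in>UNIV. \<Sum>y\<in>UNIV. f (u, x, y))" for f :: "'u::finite \<times> 'x::finite \<times> 'z::finite \<Rightarrow> 'r::comm_monoid_add"
  by (simp add: sum.cartesian_product UNIV_Times_UNIV[symmetric] del: UNIV_Times_UNIV)

lemma aa_nonneg: "aa pUX W i \<ge> 0" unfolding aa_def by (auto split: prod.splits)

lemma aa_sum:
  fixes pUX :: "('u::finite \<times> 'x::finite) pmf" and W :: "'x \<Rightarrow> ('y \<times> 'z::finite) pmf"
  shows "(\<Sum>i\<in>(UNIV :: ('u \<times> 'x \<times> 'z) set). aa pUX W i) = 1"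
proof -
  have "(\<Sum>i\<in>(UNIV :: ('u \<times> 'x \<times> 'z) set). aa pUX W i) = (\<Sum>u\<in>UNIV. \<Sum>x\<in>UNIV. pmf pUX (u, x))"
    unfolding sum_triple aa_def by (simp add: sum_pmf_eq_1 flip: sum_distrib_left)
  also have "\<dots> = (\<Sum>i\<in>UNIV. pmf pUX i)"
    by (simp add: sum.cartesian_product UNIV_Times_UNIV[symmetric] del: UNIV_Times_UNIV)
  also have "\<dots> = 1" by (simp add: sum_pmf_eq_1)
  finally show ?thesis .
qed

lemma v_pos:
  fixes pUX :: "('u \<times> 'x::finite) pmf"
  assumes "pmf pUX (u, x) > 0" "pmf (chanZ W x) y > 0"
  shows "pmf (chanZU pUX W u) y > 0"
proof -
  have pU: "pUm pUX u > 0"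
    unfolding pUm_def using assms(1) by (intro sum_pos2[where i=x]) auto
  have "(\<Sum>x\<in>UNIV. pmf pUX (u, x) * pmf (chanZ W x) y) > 0"
    using assms by (intro sum_pos2[where i=x]) auto
  then show ?thesis using pU by (simp add: pmf_chanZU)
qed

lemma Phi_eq:
  fixes pUX :: "('u::finite \<times> 'x::finite) pmf" and W :: "'x \<Rightarrow> ('y \<times> 'z::finite) pmf"
  shows "Phi pUX W s = (\<Sum>i\<in>(UNIV :: ('u \<times> 'x \<times> 'z) set). aa pUX W i * 2 powr (s * ll pUX W i))"
proof -
  have "Phi pUX W s = (\<Sum>u\<in>UNIV. g1 pUX W s u * pUm pUX u)"
    unfolding Phi_def by (subst integral_measure_pmf_real[where A=UNIV]) (auto simp: pmf_margU)
  also have "\<dots> = (\<Sum>u\<in>UNIV. \<Sum>x\<in>UNIV. \<Sum>y\<in>UNIV. aa pUX W (u, x, y) * 2 powr (s * ll pUX W (u, x, y)))"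
  proof (intro sum.cong refl)
    fix u
    show "g1 pUX W s u * pUm pUX u = (\<Sum>x\<in>UNIV. \<Sum>y\<in>UNIV. aa pUX W (u, x, y) * 2 powr (s * ll pUX W (u, x, y)))"
    proof (cases "pUm pUX u > 0")
      case False
      have "pUm pUX u \<ge> 0" unfolding pUm_def by (simp add: sum_nonneg)
      hence p0: "pUm pUX u = 0" using False by simp
      hence z: "pmf pUX (u, x) = 0" for x
        using sum_nonneg_eq_0_iff[of UNIV "\<lambda>x. pmf pUX (u, x)"] unfolding pUm_def by simp
      show ?thesis by (simp add: aa_def z p0)
    next
      case True
      have "g1 pUX W s u = (\<Sum>x\<in>UNIV. (\<Sum>y\<in>UNIV. rr pUX W s u x y) * pmf (cond_X_U pUX u) x)"
        unfolding g1_def by (intro integral_measure_pmf_real) auto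
      hence "g1 pUX W s u = (\<Sum>x\<in>UNIV. \<Sum>y\<in>UNIV. pmf pUX (u, x) * rr pUX W s u x y) / pUm pUX u"
        using True by (simp add: pmf_condXU sum_distrib_right sum_distrib_left mult_ac flip: sum_divide_distrib)
      hence "g1 pUX W s u * pUm pUX u = (\<Sum>x\<in>UNIV. \<Sum>y\<in>UNIV. pmf pUX (u, x) * rr pUX W s u x y)"
        using True by simp
      also have "\<dots> = (\<Sum>x\<in>UNIV. \<Sum>y\<in>UNIV. aa pUX W (u, x, y) * 2 powr (s * ll pUX W (u, x, y)))"
      proof (intro sum.cong refl)
        fix x y
        show "pmf pUX (u, x) * rr pUX W s u x y = aa pUX W (u, x, y) * 2 powr (s * ll pUX W (u, x, y))"
        proof (cases "pmf pUX (u, x) > 0 \<and> pmf (chanZ W x) y > 0")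
          case True
          hence v: "pmf (chanZU pUX W u) y > 0" by (intro v_pos) auto
          have q: "pmf (chanZ W x) y / pmf (chanZU pUX W u) y > 0" using True v by simp
          have "2 powr (s * log 2 (pmf (chanZ W x) y / pmf (chanZU pUX W u) y)) =
                (pmf (chanZ W x) y / pmf (chanZU pUX W u) y) powr s"
            using q by (simp add: powr_powr[symmetric] mult.commute[of s])
          then show ?thesis by (simp add: aa_def ll_def rr_def)
        next
          case False
          hence "pmf pUX (u, x) = 0 \<or> pmf (chanZ W x) y = 0" using pmf_nonneg
            by (metis less_eq_real_def)
          then show ?thesis by (auto simp: aa_def rr_def)
        qed
      qed
      finally show ?thesis .
    qed
  qed
  also have "\<dots> = (\<Sum>i\<in>(UNIV :: ('u \<times> 'x \<times> 'z) set). aa pUX W i * 2 powr (s * ll pUX W i))"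
    by (simp add: sum_triple)
  finally show ?thesis .
qed

lemma MI_eq:
  fixes pUX :: "('u::finite \<times> 'x::finite) pmf" and W :: "'x \<Rightarrow> ('y \<times> 'z::finite) pmf"
  shows "cond_mutual_info pUX W = (\<Sum>i\<in>(UNIV :: ('u \<times> 'x \<times> 'z) set). aa pUX W i * ll pUX W i)"
  unfolding cond_mutual_info_def Let_def sum_triple
proof (intro sum.cong refl)
  fix u x y
  let ?A = "pmf pUX (u, x) * pmf (chanZ W x) y"
  show "(if ?A = 0 then 0 else ?A * log 2 (?A * (\<Sum>x\<in>UNIV. pmf pUX (u, x)) /
          (pmf pUX (u, x) * (\<Sum>x\<in>UNIV. pmf pUX (u, x) * pmf (chanZ W x) y)))) =
        aa pUX W (u, x, y) * ll pUX W (u, x, y)"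
  proof (cases "?A = 0")
    case True then show ?thesis by (simp add: aa_def)
  next
    case False
    hence p: "pmf pUX (u, x) > 0" and w: "pmf (chanZ W x) y > 0"
      using pmf_nonneg by (auto simp: less_eq_real_def)
    have pU: "pUm pUX u > 0"
      unfolding pUm_def using p by (intro sum_pos2[where i=x]) auto
    have S: "(\<Sum>x\<in>UNIV. pmf pUX (u, x) * pmf (chanZ W x) y) > 0"
      using p w by (intro sum_pos2[where i=x]) auto
    have "?A * (\<Sum>x\<in>UNIV. pmf pUX (u, x)) / (pmf pUX (u, x) * (\<Sum>x\<in>UNIV. pmf pUX (u, x) * pmf (chanZ W x) y))
        = pmf (chanZ W x) y / pmf (chanZU pUX W u) y"
      using p pU S by (simp add: pmf_chanZU pUm_def field_simps)
    then show ?thesis using False by (simp add: aa_def ll_def)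
  qed
qed



lemma c_renyi:
  fixes pK :: "nat pmf"
  assumes pK: "set_pmf pK \<subseteq> {..<Nr}"
  shows "(\<Sum>k<Nr. (pmf pK k)\<^sup>2) = 2 powr (- renyi2 pK)"
proof -
  have fin: "finite (set_pmf pK)" by (rule finite_subset[OF pK]) simp
  have eq: "(\<Sum>k<Nr. (pmf pK k)\<^sup>2) = (\<Sum>k\<in>set_pmf pK. (pmf pK k)\<^sup>2)"
  proof (rule sum.mono_neutral_right)
    show "\<forall>i\<in>{..<Nr} - set_pmf pK. (pmf pK i)\<^sup>2 = 0" by (simp add: set_pmf_eq)
  qed (use pK in auto)
  obtain k0 where k0: "k0 \<in> set_pmf pK" using set_pmf_not_empty[of pK] by blast
  have pos: "(\<Sum>k\<in>set_pmf pK. (pmf pK k)\<^sup>2) > 0"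
    using fin k0 by (intro sum_pos2[where i=k0]) (auto simp: set_pmf_iff)
  show ?thesis unfolding eq renyi2_def using pos by simp
qed

lemma eventually_six:
  assumes b: "b > 0"
  shows "eventually (\<lambda>n. 6 * 2 powr (- b * real n) \<le> 2 powr (- (b / 2) * real n)) sequentially"
proof -
  obtain M :: nat where M: "real M \<ge> 10 / (b * ln 2)" using real_arch_simple by blast
  have ln2: "ln (2::real) > 0" by simp
  show ?thesis
  proof (rule eventually_sequentiallyI[of M])
    fix n assume n: "n \<ge> M"
    have "real n \<ge> 10 / (b * ln 2)" using M n by linarith
    hence y: "(b / 2) * real n * ln 2 \<ge> 5" using b ln2 by (simp add: field_simps)
    have "6 \<le> 1 + (b / 2) * real n * ln 2" using y by simp
    also have "\<dots> \<le> exp ((b / 2) * real n * ln 2)" by (rule exp_ge_add_one_self)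
    also have "\<dots> = 2 powr ((b / 2) * real n)" by (simp add: powr_def mult.commute)
    finally have "6 \<le> 2 powr ((b / 2) * real n)" .
    hence "6 * 2 powr (- b * real n) \<le> 2 powr ((b / 2) * real n) * 2 powr (- b * real n)"
      by (intro mult_right_mono) auto
    also have "\<dots> = 2 powr (- (b / 2) * real n)" by (simp add: powr_add[symmetric])
    finally show "6 * 2 powr (- b * real n) \<le> 2 powr (- (b / 2) * real n)" .
  qed
qed

theorem lemma4:
  fixes pUX :: "('u::finite \<times> 'x::finite) pmf"
    and W :: "'x \<Rightarrow> ('y::finite \<times> 'z::finite) pmf"
    and R0 R Rr :: real
    and pK :: "nat \<Rightarrow> nat pmf"
  assumes "R0 > 0" and "R > 0" and "Rr > 0"
    and "\<And>n. set_pmf (pK n) \<subseteq> {..<idx_size Rr n}"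
    and "liminf (\<lambda>n. ereal (renyi2 (pK n) / real n)) > ereal (cond_mutual_info pUX W)"
  shows "\<exists>\<beta>>0. eventually (\<lambda>n.
           measure_pmf.expectation (codebook_pmf pUX R0 R Rr n)
             (\<lambda>cb. var_dist (joint_MZ W R0 R n (pK n) cb)
                            (product_of_marginals (joint_MZ W R0 R n (pK n) cb)))
           \<le> 2 powr (- \<beta> * real n)) sequentially"
proof -
  note pK = assms(4)
  define I where "I = cond_mutual_info pUX W"
  obtain r where r1: "ereal I < ereal r" and r2: "ereal r < liminf (\<lambda>n. ereal (renyi2 (pK n) / real n))"
    using ereal_dense2[OF assms(5)] unfolding I_def by blast
  have Ir: "I < r" using r1 by simp
  define \<delta> where "\<delta> = (r - I) / 2"
  have d: "\<delta> > 0" using Ir by (simp add: \<delta>_def)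
  obtain s where s0: "s > 0" and s1: "s \<le> 1" and
    sb: "(\<Sum>i\<in>(UNIV :: ('u \<times> 'x \<times> 'z) set). aa pUX W i * 2 powr (s * ll pUX W i)) \<le>
         2 powr (s * ((\<Sum>i\<in>(UNIV :: ('u \<times> 'x \<times> 'z) set). aa pUX W i * ll pUX W i) + \<delta> / 2))"
  proof -
    have d2: "\<delta> / 2 > 0" using d by simp
    have a0: "\<And>i. i \<in> (UNIV :: ('u \<times> 'x \<times> 'z) set) \<Longrightarrow> aa pUX W i \<ge> 0" by (rule aa_nonneg)
    have fU: "finite (UNIV :: ('u \<times> 'x \<times> 'z) set)" by simp
    show ?thesis using mgf_bound[OF fU a0 aa_sum[of pUX W] d2, of "ll pUX W"] that by blast
  qed
  have Phi_b: "Phi pUX W s \<le> 2 powr (s * (I + \<delta> / 2))"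
    using sb by (simp add: Phi_eq MI_eq I_def)
  have Phi0: "Phi pUX W s \<ge> 0" unfolding Phi_def by (intro Bochner_Integration.integral_nonneg g1_nonneg)
  define b where "b = s * \<delta> / 2"
  have b: "b > 0" using s0 d by (simp add: b_def)
  have ev1: "eventually (\<lambda>n. renyi2 (pK n) / real n > r) sequentially"
    using less_LiminfD[OF r2] by simp
  have main: "eventually (\<lambda>n.
           measure_pmf.expectation (codebook_pmf pUX R0 R Rr n)
             (\<lambda>cb. var_dist (joint_MZ W R0 R n (pK n) cb)
                            (product_of_marginals (joint_MZ W R0 R n (pK n) cb)))
           \<le> 6 * 2 powr (- b * real n)) sequentially"
    using ev1 eventually_ge_at_top[of 1]
  proof eventually_elim
    case (elim n)
    have n1: "real n \<ge> 1" using elim(2) by simp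
    have R2: "renyi2 (pK n) > real n * r" using elim(1) n1 by (simp add: field_simps)
    define Nr where "Nr = idx_size Rr n"
    define T where "T = real n * (I + \<delta>)"
    define c where "c = (\<Sum>k<Nr. (pmf (pK n) k)\<^sup>2)"
    have c: "c = 2 powr (- renyi2 (pK n))" unfolding c_def Nr_def by (rule c_renyi[OF pK])
    have finPU: "finite (set_pmf (PU pUX n))" unfolding PU_def by (intro finite_set_Pi_pmf) auto
    have intPU: "integrable (measure_pmf (PU pUX n)) f" for f :: "_ \<Rightarrow> real"
      using finPU by (rule integrable_measure_pmf_finite)
    have "measure_pmf.expectation (codebook_pmf pUX R0 R Rr n)
             (\<lambda>cb. var_dist (joint_MZ W R0 R n (pK n) cb)
                            (product_of_marginals (joint_MZ W R0 R n (pK n) cb)))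
         \<le> 2 * measure_pmf.expectation (PU pUX n) (Gfun pUX W n Nr (pK n))"
      unfolding Nr_def by (rule exp_V_bound[OF pK])
    also have "measure_pmf.expectation (PU pUX n) (Gfun pUX W n Nr (pK n)) \<le>
        measure_pmf.expectation (PU pUX n) (\<lambda>u. sqrt (c * 2 powr T) + 2 * (2 powr (- s * T) * (\<Prod>t<n. g1 pUX W s (u t))))"
    proof (intro integral_mono intPU)
      fix u
      have "Gfun pUX W n Nr (pK n) u \<le> sqrt (c * 2 powr T) + 2 * eps pUX W n T u"
        unfolding c_def using pK[of n] by (intro Gfun_bound) (simp add: Nr_def)
      also have "eps pUX W n T u \<le> 2 powr (- s * T) * (\<Prod>t<n. g1 pUX W s (u t))"
        using s0 by (rule eps_bound)
      finally show "Gfun pUX W n Nr (pK n) u \<le> sqrt (c * 2 powr T) + 2 * (2 powr (- s * T) * (\<Prod>t<n. g1 pUX W s (u t)))"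
        by simp
    qed
    also have "\<dots> = sqrt (c * 2 powr T) + 2 * (2 powr (- s * T) * Phi pUX W s ^ n)"
      by (simp add: intPU PU_prod)
    also have "sqrt (c * 2 powr T) \<le> 2 powr (- b * real n)"
    proof -
      have "c * 2 powr T = 2 powr (T - renyi2 (pK n))" by (simp add: c powr_add[symmetric])
      also have "\<dots> \<le> 2 powr (- (2 * \<delta>) * real n + real n * \<delta>)"
      proof (intro powr_mono)
        have e1: "T = real n * I + real n * \<delta>" by (simp add: T_def algebra_simps)
        have e2: "(2 * \<delta>) * real n = real n * r - real n * I" by (simp add: \<delta>_def field_simps)
        show "T - renyi2 (pK n) \<le> - (2 * \<delta>) * real n + real n * \<delta>"
          using e1 e2 R2 by (simp only: minus_mult_left)
      qed auto
      also have "\<dots> = (2 powr (- \<delta> * real n / 2))\<^sup>2"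
        by (simp add: power2_eq_square powr_add[symmetric] algebra_simps)
      finally have "sqrt (c * 2 powr T) \<le> 2 powr (- \<delta> * real n / 2)"
        by (simp add: real_le_lsqrt real_sqrt_le_iff)
      also have "\<dots> \<le> 2 powr (- b * real n)"
        using s1 d n1 by (intro powr_mono) (auto simp: b_def field_simps intro!: mult_left_le)
      finally show ?thesis .
    qed
    also have "2 powr (- s * T) * Phi pUX W s ^ n \<le> 2 powr (- s * T) * (2 powr (s * (I + \<delta> / 2))) ^ n"
      using Phi0 Phi_b by (intro mult_left_mono power_mono) auto
    also have "2 powr (- s * T) * (2 powr (s * (I + \<delta> / 2))) ^ n = 2 powr (- b * real n)"
      by (simp add: powr_realpow[symmetric] powr_powr powr_add[symmetric] T_def b_def algebra_simps
                    flip: powr_power)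
    finally show ?case by simp
  qed
  have "eventually (\<lambda>n.
           measure_pmf.expectation (codebook_pmf pUX R0 R Rr n)
             (\<lambda>cb. var_dist (joint_MZ W R0 R n (pK n) cb)
                            (product_of_marginals (joint_MZ W R0 R n (pK n) cb)))
           \<le> 2 powr (- (b / 2) * real n)) sequentially"
    using main eventually_six[OF b] by eventually_elim linarith
  then show ?thesis using b by (intro exI[of _ "b / 2"]) auto
qed


end
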